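(* Let $\varepsilon\in(0,1)$, $\alpha\in(0,\tfrac12)$, $T>0$ and $p\in[0,2)$. Suppose $X$ is a fixed value in $[(1-\alpha)T,(1+\alpha)T]$, and suppose we have access to $T$ and to independent random variables $Y_1,\dots,Y_N$ with $\mathbb{E}[Y_j]=X$ and $\mathrm{Var}[Y_j]\le T^2/4$ for all $j$, where $N=O(\log^2\frac1\varepsilon)$. Then one can construct an estimator $\hat{Q}$ (a function of $T$ and $Y_1,\dots,Y_N$) of $X^p$ with $|\mathbb{E}[\hat{Q}]-X^p|\le\varepsilon^{10}T^p$ and $\mathrm{Var}[\hat{Q}]=O(T^{2p}\log(1/\varepsilon))$. *)

theory Defs
  imports "HOL-Probability.Probability"
begin

end

theory Submission imports Defs begin

lemma gchoose_bound:
  fixes p :: real assumes "0 \<le> p" "p < 2"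
  shows "\<bar>p gchoose k\<bar> \<le> 2"
proof -
  have rec: "\<bar>p gchoose Suc k\<bar> = \<bar>p gchoose k\<bar> * \<bar>p - k\<bar> / (k+1)" for k
  proof -
    have "of_nat (Suc k) * (p gchoose Suc k) = (p - k) * (p gchoose k)"
      using gbinomial_mult_1[of p k] by (simp add: algebra_simps)
    hence "(p gchoose Suc k) = (p - k) * (p gchoose k) / (k+1)"
      by (simp add: field_simps)
    thus ?thesis by (simp add: abs_mult abs_divide)
  qed
  have "\<bar>p gchoose Suc k\<bar> \<le> 2" for k
  proof (induction k)
    case 0 then show ?case using rec[of 0] assms by simp
  next
    case (Suc k)
    have "\<bar>p - real (Suc k)\<bar> \<le> real (Suc k + 1)" using assms by auto
    moreover have pos: "0 < real (Suc k + 1)" by simp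
    ultimately have le1: "\<bar>p - real (Suc k)\<bar> / real (Suc k + 1) \<le> 1"
      by (simp only: pos_divide_le_eq[OF pos] mult_1_left)
    have r: "\<bar>p gchoose Suc (Suc k)\<bar> = \<bar>p gchoose Suc k\<bar> * (\<bar>p - real (Suc k)\<bar> / real (Suc k + 1))"
      using rec[of "Suc k"] by (simp only: times_divide_eq_right)
    have "\<bar>p gchoose Suc (Suc k)\<bar> \<le> \<bar>p gchoose Suc k\<bar>"
      unfolding r by (rule mult_left_le[OF le1 abs_ge_zero])
    then show ?case using Suc by linarith
  qed
  then show ?thesis by (cases k) auto
qed

lemma (in prob_space) core:
  fixes Z :: "nat \<Rightarrow> 'a \<Rightarrow> real" and c :: "nat \<Rightarrow> real"
  assumes ind: "indep_vars (\<lambda>_. borel) Z {..<n}"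
    and int1: "\<And>j. j < n \<Longrightarrow> integrable M (Z j)"
    and int2: "\<And>j. j < n \<Longrightarrow> integrable M (\<lambda>\<omega>. (Z j \<omega>)^2)"
    and ex1: "\<And>j. j < n \<Longrightarrow> expectation (Z j) = u"
    and ex2: "\<And>j. j < n \<Longrightarrow> expectation (\<lambda>\<omega>. (Z j \<omega>)^2) \<le> 1/2"
    and cb: "\<And>k. \<bar>c k\<bar> \<le> 2"
  defines "Q \<equiv> (\<lambda>\<omega>. \<Sum>k<n. c k * (\<Prod>j<k. Z j \<omega>))"
  shows "integrable M Q" "integrable M (\<lambda>\<omega>. (Q \<omega>)^2)"
    "expectation Q = (\<Sum>k<n. c k * u^k)"
    "expectation (\<lambda>\<omega>. (Q \<omega>)^2) \<le> 8 * real n"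
proof -
  have indk: "indep_vars (\<lambda>_. borel) Z {..<k}" if "k \<le> n" for k
    using indep_vars_subset[OF ind] that by auto
  have ind2: "indep_vars (\<lambda>_. borel) (\<lambda>j \<omega>. (Z j \<omega>)^2) {..<k}" if "k \<le> n" for k
    by (rule indep_vars_compose2[OF indk[OF that]]) auto
  have P1: "integrable M (\<lambda>\<omega>. \<Prod>j<k. Z j \<omega>)" if "k \<le> n" for k
    using indep_vars_integrable[OF _ indk[OF that]] int1 that by auto
  have E1: "expectation (\<lambda>\<omega>. \<Prod>j<k. Z j \<omega>) = u^k" if "k \<le> n" for k
    using indep_vars_lebesgue_integral[OF _ indk[OF that]] int1 ex1 that by auto
  have P2: "integrable M (\<lambda>\<omega>. \<Prod>j<k. (Z j \<omega>)^2)" if "k \<le> n" for k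
    using indep_vars_integrable[OF _ ind2[OF that]] int2 that by auto
  have E2: "expectation (\<lambda>\<omega>. \<Prod>j<k. (Z j \<omega>)^2) \<le> (1/2)^k" if "k \<le> n" for k
  proof -
    have "expectation (\<lambda>\<omega>. \<Prod>j<k. (Z j \<omega>)^2) = (\<Prod>j<k. expectation (\<lambda>\<omega>. (Z j \<omega>)^2))"
      using indep_vars_lebesgue_integral[OF _ ind2[OF that]] int2 that by auto
    also have "\<dots> \<le> (\<Prod>j<k. 1/2)"
      by (rule prod_mono) (use ex2 that in auto)
    finally show ?thesis by simp
  qed
  show intQ: "integrable M Q" unfolding Q_def using P1 by auto
  have "expectation Q = (\<Sum>k<n. expectation (\<lambda>\<omega>. c k * (\<Prod>j<k. Z j \<omega>)))"
    unfolding Q_def by (rule Bochner_Integration.integral_sum) (use P1 in auto)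
  also have "\<dots> = (\<Sum>k<n. c k * u^k)"
    by (rule sum.cong) (use E1 in auto)
  finally show "expectation Q = (\<Sum>k<n. c k * u^k)" .
  define B where "B = (\<lambda>\<omega>. n * (\<Sum>k<n. (c k)^2 * (\<Prod>j<k. (Z j \<omega>)^2)))"
  have intB: "integrable M B" unfolding B_def using P2 by auto
  have QB: "(Q \<omega>)^2 \<le> B \<omega>" for \<omega>
  proof -
    have "(Q \<omega>)^2 \<le> (\<Sum>k<n. (c k * (\<Prod>j<k. Z j \<omega>))^2) * card {..<n}"
      unfolding Q_def by (rule sum_squared_le_sum_of_squares)
    also have "\<dots> = B \<omega>" unfolding B_def
      by (simp add: power_mult_distrib prod_power_distrib mult.commute)
    finally show ?thesis .
  qed
  show intQ2: "integrable M (\<lambda>\<omega>. (Q \<omega>)^2)"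
  proof (rule Bochner_Integration.integrable_bound[OF intB])
    show "(\<lambda>\<omega>. (Q \<omega>)^2) \<in> borel_measurable M" using intQ by auto
    show "AE x in M. norm ((Q x)^2) \<le> norm (B x)"
      using QB by (auto intro!: AE_I2 order_trans[OF QB] )
  qed
  have "expectation (\<lambda>\<omega>. (Q \<omega>)^2) \<le> expectation B"
    by (rule integral_mono[OF intQ2 intB QB])
  also have "expectation B = n * (\<Sum>k<n. (c k)^2 * expectation (\<lambda>\<omega>. \<Prod>j<k. (Z j \<omega>)^2))"
    unfolding B_def by (subst integral_mult_right_zero, subst Bochner_Integration.integral_sum) (use P2 in auto)
  also have "\<dots> \<le> n * (\<Sum>k<n. 4 * (1/2)^k)"
  proof (intro mult_left_mono sum_mono)
    fix k assume "k \<in> {..<n}"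
    have "(c k)^2 \<le> 4" using cb[of k] 
    proof -
      have "\<bar>c k\<bar> \<le> \<bar>2\<bar>" using cb[of k] by simp
      hence "(c k)^2 \<le> 2^2" by (simp only: abs_le_square_iff)
      thus ?thesis by simp
    qed
    moreover have "0 \<le> expectation (\<lambda>\<omega>. \<Prod>j<k. (Z j \<omega>)^2)" by (intro integral_nonneg_AE AE_I2 prod_nonneg) auto
    ultimately show "(c k)^2 * expectation (\<lambda>\<omega>. \<Prod>j<k. (Z j \<omega>)^2) \<le> 4 * (1/2)^k"
      using E2[of k] \<open>k \<in> {..<n}\<close> by (intro mult_mono) auto
  qed auto
  also have "\<dots> \<le> real n * 8"
  proof -
    have "(\<Sum>k<n. 4 * (1/2::real)^k) = 4 * (\<Sum>k<n. (1/2)^k)" by (simp add: sum_distrib_left)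
    also have "(\<Sum>k<n. (1/2::real)^k) = 2 * (1 - (1/2)^n)"
      using geometric_sum[of "1/2::real" n] by simp
    finally have "(\<Sum>k<n. 4 * (1/2::real)^k) \<le> 8" by simp
    thus ?thesis by (intro mult_left_mono) auto
  qed
  finally show "expectation (\<lambda>\<omega>. (Q \<omega>)^2) \<le> 8 * real n" by linarith
qed

lemma tail_bound:
  fixes p u :: real and c :: "nat \<Rightarrow> real"
  assumes u: "\<bar>u\<bar> \<le> 1/2" and c: "c = (\<lambda>k. p gchoose k)" and cb: "\<And>k. \<bar>c k\<bar> \<le> 2"
  shows "\<bar>(\<Sum>k<n. c k * u^k) - (1+u) powr p\<bar> \<le> 4 * (1/2)^n"
proof -
  have "\<bar>u\<bar> < 1" using u by simp
  from gen_binomial_real[OF this, of p]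
  have S: "(\<lambda>k. c k * u^k) sums (1+u) powr p" unfolding c .
  define g where "g = (\<lambda>i. c (i+n) * u^(i+n))"
  have gs: "g sums ((1+u) powr p - (\<Sum>k<n. c k * u^k))"
    unfolding g_def using sums_split_initial_segment[OF S, of n] by simp
  define h where "h = (\<lambda>i. (2*(1/2)^n) * (1/2::real)^i)"
  have hs: "h sums ((2*(1/2)^n) * (1 / (1 - 1/2)))"
    unfolding h_def by (rule sums_mult) (rule geometric_sums, simp)
  have gh: "\<bar>g i\<bar> \<le> h i" for i
  proof -
    have "\<bar>g i\<bar> = \<bar>c (i+n)\<bar> * \<bar>u\<bar>^(i+n)" unfolding g_def by (simp add: abs_mult power_abs)
    also have "\<dots> \<le> 2 * (1/2)^(i+n)"
      by (intro mult_mono power_mono cb u) auto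
    also have "\<dots> = h i" unfolding h_def by (simp add: power_add)
    finally show ?thesis .
  qed
  have "suminf g \<le> suminf h"
    using gh gs hs by (intro suminf_le) (auto simp: sums_iff abs_le_iff)
  moreover have "- suminf g \<le> suminf h"
  proof -
    have "suminf (\<lambda>i. - g i) \<le> suminf h"
      using gh gs hs by (intro suminf_le) (auto simp: sums_iff abs_le_iff summable_minus)
    thus ?thesis using gs by (simp add: sums_iff suminf_minus)
  qed
  ultimately have "\<bar>suminf g\<bar> \<le> suminf h" by linarith
  moreover have "suminf g = (1+u) powr p - (\<Sum>k<n. c k * u^k)" using gs by (simp add: sums_iff)
  moreover have "suminf h = 4 * (1/2)^n" using hs by (simp add: sums_iff)
  ultimately show ?thesis by simp
qed

lemma n_bounds:
  fixes e :: real assumes e: "0 < e" "e < 1"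
  defines "n \<equiv> nat \<lceil>10 * log 2 (1/e)\<rceil> + 2"
  shows "real n \<le> 15 * (1 + ln (1/e))" "4 * (1/2::real)^n \<le> e^10"
proof -
  define a where "a = 10 * log 2 (1/e)"
  have L0: "0 \<le> ln (1/e)" using e by simp
  have a0: "0 \<le> a" unfolding a_def using e by simp
  have rn: "real n = real_of_int \<lceil>a\<rceil> + 2" unfolding n_def a_def using a0 a_def by simp
  have "a = 10 * (ln (1/e) / ln 2)" unfolding a_def log_def by simp
  also have "\<dots> \<le> 10 * (ln (1/e) / (2/3))"
    using ln2_ge_two_thirds L0 by (intro mult_left_mono divide_left_mono) auto
  finally have "a \<le> 15 * ln (1/e)" by simp
  moreover have "real_of_int \<lceil>a\<rceil> \<le> a + 1" by (rule of_int_ceiling_le_add_one)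
  moreover have "15 * (1 + ln (1/e)) = 15 + 15 * ln (1/e)" by simp
  ultimately show "real n \<le> 15 * (1 + ln (1/e))" using rn by linarith
  have "(2::real) powr (a + 2) \<le> 2 powr real n" using rn by (intro powr_mono) auto
  also have "2 powr real n = (2::real)^n" by (simp add: powr_realpow)
  finally have A: "2 powr (a+2) \<le> (2::real)^n" .
  have "(2::real) powr (a + 2) = 4 * (2 powr log 2 (1/e)) powr 10"
    unfolding a_def by (simp add: powr_add powr_powr mult.commute)
  also have "\<dots> = 4 * (1/e)^10" using e by (simp add: powr_realpow)
  finally have "4 * (1/e)^10 \<le> (2::real)^n" using A by simp
  hence "4 / (2::real)^n \<le> e^10" using e
    by (simp add: field_simps power_one_over)
  thus "4 * (1/2::real)^n \<le> e^10" by (simp add: power_one_over)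
qed

lemma helper:
  fixes e \<alpha> T p :: real
  assumes e: "0 < e" "e < 1" and al: "0 < \<alpha>" "\<alpha> < 1/2" and T: "0 < T" and p: "0 \<le> p" "p < 2"
  shows "\<exists>(N::nat) (Qhat :: real list \<Rightarrow> real).
          real N \<le> 120 * (1 + ln (1/e))^2 \<and>
          (\<forall>(X::real) (M::'a measure) (Y::nat \<Rightarrow> 'a \<Rightarrow> real).
             (1 - \<alpha>) * T \<le> X \<and> X \<le> (1 + \<alpha>) * T \<and>
             prob_space M \<and>
             prob_space.indep_vars M (\<lambda>_. borel) Y {..<N} \<and>
             (\<forall>j<N. integrable M (Y j) \<and> integrable M (\<lambda>\<omega>. (Y j \<omega>)^2) \<and>
                     prob_space.expectation M (Y j) = X \<and>
                     prob_space.variance M (Y j) \<le> T^2 / 4)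
             \<longrightarrow>
             (let Q = (\<lambda>\<omega>. Qhat (map (\<lambda>j. Y j \<omega>) [0..<N])) in
                integrable M Q \<and> integrable M (\<lambda>\<omega>. (Q \<omega>)^2) \<and>
                \<bar>prob_space.expectation M Q - X powr p\<bar> \<le> e^10 * T powr p \<and>
                prob_space.variance M Q \<le> 120 * T powr (2*p) * (1 + ln (1/e))))"
proof -
  define L where "L = ln (1/e)"
  have L0: "0 \<le> L" unfolding L_def using e by simp
  define n where "n = nat \<lceil>10 * log 2 (1/e)\<rceil> + 2"
  have nb: "real n \<le> 15 * (1 + L)" "4 * (1/2::real)^n \<le> e^10"
    using n_bounds[OF e] unfolding n_def L_def by auto
  define c where "c = (\<lambda>k. p gchoose k)"
  have cb: "\<And>k. \<bar>c k\<bar> \<le> 2" unfolding c_def using gchoose_bound p by auto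
  define Qhat where "Qhat = (\<lambda>ys::real list. T powr p * (\<Sum>k<n. c k * (\<Prod>j<k. ys ! j / T - 1)))"
  show ?thesis
  proof (intro exI[of _ n] exI[of _ Qhat] conjI allI impI)
    have "15 * (1 + L) \<le> 120 * (1 + L)^2" using L0 by (simp add: power2_eq_square algebra_simps)
    thus "real n \<le> 120 * (1 + ln (1/e))^2" using nb unfolding L_def by linarith
  next
    fix X :: real and M :: "'a measure" and Y :: "nat \<Rightarrow> 'a \<Rightarrow> real"
    assume A: "(1 - \<alpha>) * T \<le> X \<and> X \<le> (1 + \<alpha>) * T \<and>
             prob_space M \<and>
             prob_space.indep_vars M (\<lambda>_. borel) Y {..<n} \<and>
             (\<forall>j<n. integrable M (Y j) \<and> integrable M (\<lambda>\<omega>. (Y j \<omega>)^2) \<and>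
                     prob_space.expectation M (Y j) = X \<and>
                     prob_space.variance M (Y j) \<le> T^2 / 4)"
    interpret prob_space M using A by auto
    have X: "(1 - \<alpha>) * T \<le> X" "X \<le> (1 + \<alpha>) * T" using A by auto
    have indY: "indep_vars (\<lambda>_. borel) Y {..<n}" using A by auto
    have Yi1: "\<And>j. j < n \<Longrightarrow> integrable M (Y j)"
      and Yi2: "\<And>j. j < n \<Longrightarrow> integrable M (\<lambda>\<omega>. (Y j \<omega>)^2)"
      and Ye: "\<And>j. j < n \<Longrightarrow> expectation (Y j) = X"
      and Yv: "\<And>j. j < n \<Longrightarrow> variance (Y j) \<le> T^2/4" using A by auto
    define u where "u = X / T - 1"
    have uX: "X = T * (1 + u)" unfolding u_def using T by simp
    have ub: "\<bar>u\<bar> \<le> \<alpha>"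
    proof -
      have "(1 - \<alpha>) \<le> X / T" "X / T \<le> 1 + \<alpha>" using X T by (auto simp: field_simps)
      thus ?thesis unfolding u_def by linarith
    qed
    define Z where "Z = (\<lambda>j \<omega>. Y j \<omega> / T - 1)"
    have indZ: "indep_vars (\<lambda>_. borel) Z {..<n}"
      unfolding Z_def by (rule indep_vars_compose2[OF indY, where Y="\<lambda>_ x. x / T - 1"]) auto
    have Z2eq: "(\<lambda>\<omega>. (Z j \<omega>)^2) = (\<lambda>\<omega>. (1/T^2) * (Y j \<omega>)^2 - (2/T) * Y j \<omega> + 1)" for j
      unfolding Z_def using T by (auto simp: field_simps power2_eq_square)
    have Zi1: "integrable M (Z j)" if "j < n" for j
      unfolding Z_def using Yi1[OF that] by auto
    have Zi2: "integrable M (\<lambda>\<omega>. (Z j \<omega>)^2)" if "j < n" for j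
      unfolding Z2eq using Yi1[OF that] Yi2[OF that] by auto
    have Ze1: "expectation (Z j) = u" if "j < n" for j
      unfolding Z_def u_def using Yi1[OF that] Ye[OF that] prob_space by simp
    have Ze2: "expectation (\<lambda>\<omega>. (Z j \<omega>)^2) \<le> 1/2" if "j < n" for j
    proof -
      obtain v where v: "variance (Y j) = v" by simp
      obtain EY2 where EY2: "expectation (\<lambda>\<omega>. (Y j \<omega>)^2) = EY2" by simp
      have e1: "expectation (\<lambda>\<omega>. (Z j \<omega>)^2) = (1/T^2) * EY2 - (2/T) * X + 1"
        unfolding Z2eq using Yi1[OF that] Yi2[OF that] Ye[OF that] prob_space EY2 by simp
      have e2: "EY2 = v + X^2"
        using variance_eq[OF Yi1[OF that] Yi2[OF that]] Ye[OF that] v EY2 by simp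
      have vb: "v \<le> T^2/4" using Yv[OF that] v by simp
      have e3: "(1/T^2) * EY2 - (2/T) * X + 1 = v / T^2 + u^2"
        unfolding e2 u_def using T by (simp add: field_simps power2_eq_square)
      have "v / T^2 \<le> 1/4" using vb T by (simp add: field_simps)
      moreover have "u^2 \<le> 1/4"
      proof -
        have "\<bar>u\<bar> \<le> \<bar>1/2\<bar>" using ub al by simp
        hence "u^2 \<le> (1/2)^2" by (simp only: abs_le_square_iff)
        thus "u^2 \<le> 1/4" by (simp add: power2_eq_square)
      qed
      ultimately show ?thesis using e1 e3 by linarith
    qed
    define Qc where "Qc = (\<lambda>\<omega>. \<Sum>k<n. c k * (\<Prod>j<k. Z j \<omega>))"
    note cr = core[OF indZ Zi1 Zi2 Ze1 Ze2 cb]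
    have cr1: "integrable M Qc" unfolding Qc_def by (rule cr(1))
    have cr2: "integrable M (\<lambda>\<omega>. (Qc \<omega>)^2)" unfolding Qc_def by (rule cr(2))
    have cr3: "expectation Qc = (\<Sum>k<n. c k * u^k)" unfolding Qc_def by (rule cr(3))
    have cr4: "expectation (\<lambda>\<omega>. (Qc \<omega>)^2) \<le> 8 * real n" unfolding Qc_def by (rule cr(4))
    note core_res = cr1 cr2 cr3 cr4
    have Qeq: "(\<lambda>\<omega>. Qhat (map (\<lambda>j. Y j \<omega>) [0..<n])) = (\<lambda>\<omega>. T powr p * Qc \<omega>)"
    proof
      fix \<omega>
      show "Qhat (map (\<lambda>j. Y j \<omega>) [0..<n]) = T powr p * Qc \<omega>"
        unfolding Qhat_def Qc_def Z_def
        by (intro arg_cong[where f="\<lambda>x. T powr p * x"] sum.cong refl arg_cong[where f="\<lambda>x. c _ * x"] prod.cong) auto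
    qed
    have bias: "\<bar>expectation Qc - (1+u) powr p\<bar> \<le> e^10"
    proof -
      have ub': "\<bar>u\<bar> \<le> 1/2" using ub al by simp
      have "\<bar>(\<Sum>k<n. c k * u^k) - (1+u) powr p\<bar> \<le> 4 * (1/2)^n"
        by (rule tail_bound[OF ub' c_def cb])
      thus ?thesis using core_res(3) nb(2) by linarith
    qed
    have Xp: "X powr p = T powr p * (1+u) powr p"
      unfolding uX using T ub al by (simp add: powr_mult)
    have Tp: "T powr (2*p) = (T powr p)^2"
      by (simp add: power2_eq_square powr_add[symmetric])
    show "let Q = (\<lambda>\<omega>. Qhat (map (\<lambda>j. Y j \<omega>) [0..<n])) in
                integrable M Q \<and> integrable M (\<lambda>\<omega>. (Q \<omega>)^2) \<and>
                \<bar>expectation Q - X powr p\<bar> \<le> e^10 * T powr p \<and>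
                variance Q \<le> 120 * T powr (2*p) * (1 + ln (1/e))"
      unfolding Let_def Qeq
    proof (intro conjI)
      show I1: "integrable M (\<lambda>\<omega>. T powr p * Qc \<omega>)" using core_res(1) by auto
      have sq: "(\<lambda>\<omega>. (T powr p * Qc \<omega>)^2) = (\<lambda>\<omega>. (T powr p)^2 * (Qc \<omega>)^2)"
        by (simp add: power_mult_distrib)
      show I2: "integrable M (\<lambda>\<omega>. (T powr p * Qc \<omega>)^2)" unfolding sq using core_res(2) by auto
      have "expectation (\<lambda>\<omega>. T powr p * Qc \<omega>) - X powr p = T powr p * (expectation Qc - (1+u) powr p)"
        unfolding Xp by (simp add: algebra_simps)
      hence "\<bar>expectation (\<lambda>\<omega>. T powr p * Qc \<omega>) - X powr p\<bar> = T powr p * \<bar>expectation Qc - (1+u) powr p\<bar>"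
        by (simp add: abs_mult)
      also have "\<dots> \<le> T powr p * e^10" using bias by (intro mult_left_mono) auto
      finally show "\<bar>expectation (\<lambda>\<omega>. T powr p * Qc \<omega>) - X powr p\<bar> \<le> e^10 * T powr p"
        by (simp add: mult.commute)
      have "variance (\<lambda>\<omega>. T powr p * Qc \<omega>) \<le> expectation (\<lambda>\<omega>. (T powr p * Qc \<omega>)^2)"
        using variance_eq[OF I1 I2] by simp
      also have "\<dots> = (T powr p)^2 * expectation (\<lambda>\<omega>. (Qc \<omega>)^2)" unfolding sq by simp
      also have "\<dots> \<le> (T powr p)^2 * (8 * real n)" using core_res(4) by (intro mult_left_mono) auto
      also have "\<dots> \<le> (T powr p)^2 * (120 * (1 + L))" using nb(1) by (intro mult_left_mono) auto
      finally show "variance (\<lambda>\<omega>. T powr p * Qc \<omega>) \<le> 120 * T powr (2*p) * (1 + ln (1/e))"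
        unfolding Tp L_def by (simp add: algebra_simps)
    qed
  qed
qed

theorem mainTheorem20:
  "\<exists>C::real. C > 0 \<and>
    (\<forall>(\<epsilon>::real) (\<alpha>::real) (T::real) (p::real).
       0 < \<epsilon> \<and> \<epsilon> < 1 \<and> 0 < \<alpha> \<and> \<alpha> < 1/2 \<and> 0 < T \<and> 0 \<le> p \<and> p < 2 \<longrightarrow>
       (\<exists>(N::nat) (Qhat :: real list \<Rightarrow> real).
          real N \<le> C * (1 + ln (1/\<epsilon>))^2 \<and>
          (\<forall>(X::real) (M::'a measure) (Y::nat \<Rightarrow> 'a \<Rightarrow> real).
             (1 - \<alpha>) * T \<le> X \<and> X \<le> (1 + \<alpha>) * T \<and>
             prob_space M \<and>
             prob_space.indep_vars M (\<lambda>_. borel) Y {..<N} \<and>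
             (\<forall>j<N. integrable M (Y j) \<and> integrable M (\<lambda>\<omega>. (Y j \<omega>)^2) \<and>
                     prob_space.expectation M (Y j) = X \<and>
                     prob_space.variance M (Y j) \<le> T^2 / 4)
             \<longrightarrow>
             (let Q = (\<lambda>\<omega>. Qhat (map (\<lambda>j. Y j \<omega>) [0..<N])) in
                integrable M Q \<and> integrable M (\<lambda>\<omega>. (Q \<omega>)^2) \<and>
                \<bar>prob_space.expectation M Q - X powr p\<bar> \<le> \<epsilon>^10 * T powr p \<and>
                prob_space.variance M Q \<le> C * T powr (2*p) * (1 + ln (1/\<epsilon>))))))"
  apply (rule exI[of _ "120::real"])
  apply (intro conjI allI impI)
   apply simp
  apply (elim conjE)
  apply (rule helper)
        apply assumption+
  done

end
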